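(* For every $n\ge1$, $$\mathrm{QEC}(K_1+P_{2n})=-4\sin^2\frac{\pi}{2(2n+1)},\qquad -4\sin^2\frac{\pi}{2(2n+2)}<\mathrm{QEC}(K_1+P_{2n+1})<-4\sin^2\frac{\pi}{2(2n+3)}.$$ Moreover, $-\tfrac12=\mathrm{QEC}(K_1+P_3)<\mathrm{QEC}(K_1+P_4)<\mathrm{QEC}(K_1+P_5)<\cdots$ and $\mathrm{QEC}(K_1+P_n)\to0$ as $n\to\infty$.
   Context: For a finite connected graph $G=(V,E)$ with $|V|\ge2$, let $d(i,j)$ be the graph distance and $D=[d(i,j)]_{i,j\in V}$ the distance matrix. The quadratic embedding constant is $\mathrm{QEC}(G)=\max\{\langle f,Df\rangle : f\in\mathbb{R}^V,\ \langle f,f\rangle=1,\ \langle\mathbf 1,f\rangle=0\}$, where $\mathbf 1$ is the all-ones vector. The fan graph $K_1+P_n$ has vertex set $\{0,1,\dots,n\}$ and edges $\{i,i+1\}$ ($1\le i\le n-1$) and $\{0,i\}$ ($1\le i\le n$). *)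

theory Defs
  imports "HOL-Analysis.Analysis"
begin

definition is_walk :: "'a set \<Rightarrow> ('a \<Rightarrow> 'a \<Rightarrow> bool) \<Rightarrow> 'a \<Rightarrow> 'a \<Rightarrow> nat \<Rightarrow> bool" where
  "is_walk V E i j k \<longleftrightarrow> (\<exists>p. length p = Suc k \<and> set p \<subseteq> V \<and> p ! 0 = i \<and> p ! k = j
      \<and> (\<forall>l<k. E (p ! l) (p ! Suc l)))"

definition graph_dist :: "'a set \<Rightarrow> ('a \<Rightarrow> 'a \<Rightarrow> bool) \<Rightarrow> 'a \<Rightarrow> 'a \<Rightarrow> nat" where
  "graph_dist V E i j = (LEAST k. is_walk V E i j k)"

text \<open>Quadratic embedding constant: max of <f, D f> over f with <f,f> = 1, <1,f> = 0
  (written as a supremum; the maximum is attained by compactness).\<close>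
definition QEC :: "'a set \<Rightarrow> ('a \<Rightarrow> 'a \<Rightarrow> bool) \<Rightarrow> real" where
  "QEC V E = Sup {(\<Sum>i\<in>V. \<Sum>j\<in>V. f i * real (graph_dist V E i j) * f j) | f.
      (\<Sum>i\<in>V. (f i)\<^sup>2) = 1 \<and> (\<Sum>i\<in>V. f i) = 0}"

text \<open>Fan graph K_1 + P_n: vertices 0..n, edges {i,i+1} (1 \<le> i \<le> n-1) and {0,i} (1 \<le> i \<le> n).\<close>
definition fan_V :: "nat \<Rightarrow> nat set" where
  "fan_V n = {0..n}"

definition fan_E :: "nat \<Rightarrow> nat \<Rightarrow> nat \<Rightarrow> bool" where
  "fan_E n i j \<longleftrightarrow>
     (1 \<le> i \<and> i \<le> n - 1 \<and> j = i + 1) \<or> (1 \<le> j \<and> j \<le> n - 1 \<and> i = j + 1)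
   \<or> (i = 0 \<and> 1 \<le> j \<and> j \<le> n) \<or> (j = 0 \<and> 1 \<le> i \<and> i \<le> n)"

definition QEC_fan :: "nat \<Rightarrow> real" where
  "QEC_fan n = QEC (fan_V n) (fan_E n)"

end

theory Submission
  imports Defs
begin


definition Qh :: "nat \<Rightarrow> (nat \<Rightarrow> real) \<Rightarrow> real" where
  "Qh N h = 2*(\<Sum>i=1..N. (h i)^2) - 2*(\<Sum>i\<in>{1..<N}. h i * h (Suc i))"

lemma GS:
  assumes "u 0 = 0" "\<forall>i\<in>{1..N}. u i \<noteq> 0"
    "\<forall>i\<in>{1..N}. u (i-1) + u (Suc i) = (2-\<mu>) * u i" "N \<ge> 1"
  shows "Qh N h - \<mu>*(\<Sum>i=1..N. (h i)^2) =
     (\<Sum>j\<in>{1..<N}. u j * u (Suc j) * (h j / u j - h (Suc j) / u (Suc j))^2) + u (Suc N) / u N * (h N)^2"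
  using assms
proof (induction N)
  case 0 then show ?case by simp
next
  case (Suc N)
  show ?case
  proof (cases "N = 0")
    case True
    with Suc.prems have u1: "u 1 \<noteq> 0" and r: "u 2 = (2-\<mu>) * u 1" by (auto simp: numeral_2_eq_2)
    have r': "u (Suc (Suc 0)) = (2-\<mu>) * u (Suc 0)" using r by (simp add: numeral_2_eq_2)
    show ?thesis using True u1 by (simp add: r' Qh_def field_simps power2_eq_square)
  next
    case False
    have IH: "Qh N h - \<mu>*(\<Sum>i=1..N. (h i)^2) =
     (\<Sum>j\<in>{1..<N}. u j * u (Suc j) * (h j / u j - h (Suc j) / u (Suc j))^2) + u (Suc N) / u N * (h N)^2"
      using Suc.prems False by (intro Suc.IH) auto
    have uN: "u N \<noteq> 0" "u (Suc N) \<noteq> 0" using Suc.prems False by auto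
    have rec: "u N + u (Suc (Suc N)) = (2-\<mu>) * u (Suc N)" using Suc.prems(3) by (metis Suc_eq_plus1 add_diff_cancel_right' atLeastAtMost_iff le_add2 order_refl)
    have Q: "Qh (Suc N) h = Qh N h + 2*(h (Suc N))^2 - 2 * h N * h (Suc N)"
      using False by (simp add: Qh_def)
    have S: "(\<Sum>j\<in>{1..<Suc N}. u j * u (Suc j) * (h j / u j - h (Suc j) / u (Suc j))^2)
       = (\<Sum>j\<in>{1..<N}. u j * u (Suc j) * (h j / u j - h (Suc j) / u (Suc j))^2)
          + u N * u (Suc N) * (h N / u N - h (Suc N) / u (Suc N))^2"
      using False by simp
    have key: "u N * u (Suc N) * (h N / u N - h (Suc N) / u (Suc N))^2
        = u (Suc N) / u N * (h N)^2 - 2 * h N * h (Suc N) + u N / u (Suc N) * (h (Suc N))^2"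
      using uN by (simp add: field_simps power2_eq_square)
    have key2: "u N / u (Suc N) + u (Suc (Suc N)) / u (Suc N) = 2 - \<mu>"
      using uN rec by (simp add: field_simps)
    have k3: "u N / u (Suc N) * (h (Suc N))^2 + u (Suc (Suc N)) / u (Suc N) * (h (Suc N))^2 = (2-\<mu>) * (h (Suc N))^2"
      using key2 by (metis distrib_right)
    have sq: "(\<Sum>i=1..Suc N. (h i)^2) = (\<Sum>i=1..N. (h i)^2) + (h (Suc N))^2" by simp
    show ?thesis
      unfolding Q S sq using IH key k3 by (simp add: algebra_simps)
  qed
qed



lemma fan_E_irrefl: "\<not> fan_E n i i"
  by (auto simp: fan_E_def)

lemma walk0: "is_walk V E i j 0 \<longleftrightarrow> i = j \<and> i \<in> V"
proof
  assume "is_walk V E i j 0"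
  then obtain p where "length p = 1" "set p \<subseteq> V" "p!0 = i" "p!0 = j" unfolding is_walk_def by auto
  then show "i = j \<and> i \<in> V" by (metis nth_mem One_nat_def less_one subsetD)
next
  assume "i = j \<and> i \<in> V" then show "is_walk V E i j 0"
    unfolding is_walk_def by (intro exI[of _ "[i]"]) auto
qed

lemma walk1: "i \<in> V \<Longrightarrow> j \<in> V \<Longrightarrow> is_walk V E i j 1 \<longleftrightarrow> E i j"
proof
  assume "is_walk V E i j 1"
  then show "E i j" unfolding is_walk_def by auto
next
  assume "i \<in> V" "j \<in> V" "E i j" then show "is_walk V E i j 1"
    unfolding is_walk_def by (intro exI[of _ "[i,j]"]) (auto simp: less_Suc_eq)
qed

lemma walk2: "i \<in> V \<Longrightarrow> j \<in> V \<Longrightarrow> x \<in> V \<Longrightarrow> E i x \<Longrightarrow> E x j \<Longrightarrow> is_walk V E i j 2"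
  unfolding is_walk_def
  by (intro exI[of _ "[i,x,j]"]) (auto simp: less_Suc_eq numeral_2_eq_2)

lemma fan_dist:
  assumes "n \<ge> 1" "i \<le> n" "j \<le> n"
  shows "graph_dist (fan_V n) (fan_E n) i j = (if i = j then 0 else if fan_E n i j then 1 else 2)"
proof -
  have iV: "i \<in> fan_V n" and jV: "j \<in> fan_V n" and zV: "0 \<in> fan_V n" using assms by (auto simp: fan_V_def)
  show ?thesis
  proof (cases "i = j")
    case True
    then show ?thesis unfolding graph_dist_def using iV by (simp add: walk0)
  next
    case ne: False
    show ?thesis
    proof (cases "fan_E n i j")
      case True
      have "(LEAST k. is_walk (fan_V n) (fan_E n) i j k) = 1"
      proof (rule Least_equality)
        show "is_walk (fan_V n) (fan_E n) i j 1" using walk1[OF iV jV] True by simp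
        fix y assume "is_walk (fan_V n) (fan_E n) i j y"
        then show "1 \<le> y" using walk0[of "fan_V n" "fan_E n" i j] ne by (cases y) auto
      qed
      then show ?thesis using ne True unfolding graph_dist_def by simp
    next
      case False
      have i0: "i \<noteq> 0" "j \<noteq> 0" using False ne assms by (auto simp: fan_E_def)
      have w2: "is_walk (fan_V n) (fan_E n) i j 2"
        by (rule walk2[OF iV jV zV]) (use i0 assms in \<open>auto simp: fan_E_def\<close>)
      have "(LEAST k. is_walk (fan_V n) (fan_E n) i j k) = 2"
      proof (rule Least_equality)
        show "is_walk (fan_V n) (fan_E n) i j 2" by (fact w2)
        fix y assume "is_walk (fan_V n) (fan_E n) i j y"
        then show "2 \<le> y" using False ne iV jV walk0[of "fan_V n" "fan_E n" i j] walk1[OF iV jV, of "fan_E n"]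
          by (cases y; cases "y - 1") auto
      qed
      then show ?thesis using ne False unfolding graph_dist_def by simp
    qed
  qed
qed

lemma dsum1:
  fixes n :: nat and F :: "nat \<Rightarrow> nat \<Rightarrow> real"
  assumes "n \<ge> 1"
  shows "(\<Sum>i\<in>{0..n}. \<Sum>j\<in>{0..n}. if 1\<le>i \<and> i\<le>n-1 \<and> j=i+1 then F i j else (0::real))
     = (\<Sum>i\<in>{1..<n}. F i (Suc i))"
proof -
  have "\<And>i. i \<in> {0..n} \<Longrightarrow> (\<Sum>j\<in>{0..n}. if 1\<le>i \<and> i\<le>n-1 \<and> j=i+1 then F i j else (0::real))
      = (if 1\<le>i \<and> i\<le>n-1 then F i (Suc i) else 0)"
  proof -
    fix i assume "i \<in> {0..n}"
    have "(\<Sum>j\<in>{0..n}. if 1\<le>i \<and> i\<le>n-1 \<and> j=i+1 then F i j else (0::real))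
       = (\<Sum>j\<in>{0..n}. if 1\<le>i \<and> i\<le>n-1 then (if j = Suc i then F i j else 0) else (0::real))"
      by (rule sum.cong) auto
    also have "\<dots> = (if 1\<le>i \<and> i\<le>n-1 then F i (Suc i) else 0)"
      using assms by (auto simp: sum.delta')
    finally show "?thesis i" .
  qed
  then have "(\<Sum>i\<in>{0..n}. \<Sum>j\<in>{0..n}. if 1\<le>i \<and> i\<le>n-1 \<and> j=i+1 then F i j else (0::real))
      = (\<Sum>i\<in>{0..n}. if 1\<le>i \<and> i\<le>n-1 then F i (Suc i) else 0)"
    by (rule sum.cong[OF refl])
  also have "\<dots> = (\<Sum>i\<in>{0..n} \<inter> {i. 1\<le>i \<and> i\<le>n-1}. F i (Suc i))"
    by (simp add: sum.inter_restrict)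
  also have "{0..n} \<inter> {i. 1\<le>i \<and> i\<le>n-1} = {1..<n}" using assms by auto
  finally show ?thesis .
qed

lemma dsum3:
  fixes n :: nat and F :: "nat \<Rightarrow> nat \<Rightarrow> real"
  shows "(\<Sum>i\<in>{0..n}. \<Sum>j\<in>{0..n}. if i=0 \<and> 1\<le>j then F i j else (0::real))
     = (\<Sum>j=1..n. F 0 j)"
proof -
  have "(\<Sum>i\<in>{0..n}. \<Sum>j\<in>{0..n}. if i=0 \<and> 1\<le>j then F i j else (0::real))
     = (\<Sum>i\<in>{0..n}. if i = 0 then (\<Sum>j\<in>{0..n}. if 1\<le>j then F 0 j else (0::real)) else 0)"
    by (rule sum.cong) auto
  also have "\<dots> = (\<Sum>j\<in>{0..n}. if 1\<le>j then F 0 j else (0::real))"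
    by (simp add: sum.delta)
  also have "\<dots> = (\<Sum>j\<in>{0..n} \<inter> {j. 1 \<le> j}. F 0 j)"
    by (simp add: sum.inter_restrict)
  also have "{0..n} \<inter> {j. 1 \<le> j} = {1..n}" by auto
  finally show ?thesis .
qed

lemma value_formula:
  assumes "n \<ge> 1"
  shows "(\<Sum>i\<in>fan_V n. \<Sum>j\<in>fan_V n. f i * real (graph_dist (fan_V n) (fan_E n) i j) * f j)
    = 2*(\<Sum>i=0..n. f i)^2 - 2*(\<Sum>i=0..n. (f i)^2) - 2*f 0*(\<Sum>i=1..n. f i) - 2*(\<Sum>i\<in>{1..<n}. f i * f (Suc i))"
proof -
  let ?e1 = "\<lambda>i j. if 1\<le>i \<and> i\<le>n-1 \<and> j=i+1 then f i*f j else (0::real)"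
  let ?e2 = "\<lambda>i j. if 1\<le>j \<and> j\<le>n-1 \<and> i=j+1 then f i*f j else (0::real)"
  let ?e3 = "\<lambda>i j. if i=0 \<and> 1\<le>j then f i*f j else (0::real)"
  let ?e4 = "\<lambda>i j. if j=0 \<and> 1\<le>i then f i*f j else (0::real)"
  have pt: "f i * real (graph_dist (fan_V n) (fan_E n) i j) * f j
      = 2 * (f i * f j) - 2 * (if i = j then f i * f j else 0) - ?e1 i j - ?e2 i j - ?e3 i j - ?e4 i j"
    if "i \<in> {0..n}" "j \<in> {0..n}" for i j
  proof -
    have "i \<le> n" "j \<le> n" using that by auto
    then show ?thesis using assms by (subst fan_dist) (auto simp: fan_E_def)
  qed
  have "(\<Sum>i\<in>fan_V n. \<Sum>j\<in>fan_V n. f i * real (graph_dist (fan_V n) (fan_E n) i j) * f j)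
     = (\<Sum>i\<in>{0..n}. \<Sum>j\<in>{0..n}. 2 * (f i * f j) - 2 * (if i = j then f i * f j else 0) - ?e1 i j - ?e2 i j - ?e3 i j - ?e4 i j)"
    using pt unfolding fan_V_def[of n, symmetric] by (intro sum.cong refl) (simp add: fan_V_def)
  also have "\<dots> = 2 * (\<Sum>i\<in>{0..n}. \<Sum>j\<in>{0..n}. f i * f j) - 2 * (\<Sum>i\<in>{0..n}. \<Sum>j\<in>{0..n}. if i = j then f i * f j else 0)
     - (\<Sum>i\<in>{0..n}. \<Sum>j\<in>{0..n}. ?e1 i j) - (\<Sum>i\<in>{0..n}. \<Sum>j\<in>{0..n}. ?e2 i j)
     - (\<Sum>i\<in>{0..n}. \<Sum>j\<in>{0..n}. ?e3 i j) - (\<Sum>i\<in>{0..n}. \<Sum>j\<in>{0..n}. ?e4 i j)"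
    by (simp only: sum_subtractf sum_distrib_left)
  also have "(\<Sum>i\<in>{0..n}. \<Sum>j\<in>{0..n}. f i * f j) = (\<Sum>i=0..n. f i)^2"
    by (simp add: power2_eq_square sum_product)
  also have "(\<Sum>i\<in>{0..n}. \<Sum>j\<in>{0..n}. if i = j then f i * f j else 0) = (\<Sum>i=0..n. (f i)^2)"
    by (simp add: sum.delta power2_eq_square)
  also have "(\<Sum>i\<in>{0..n}. \<Sum>j\<in>{0..n}. ?e1 i j) = (\<Sum>i\<in>{1..<n}. f i * f (Suc i))"
    by (rule dsum1[OF assms, of "\<lambda>i j. f i * f j"])
  also have "(\<Sum>i\<in>{0..n}. \<Sum>j\<in>{0..n}. ?e2 i j) = (\<Sum>j\<in>{0..n}. \<Sum>i\<in>{0..n}. ?e2 i j)"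
    by (rule sum.swap)
  also have "\<dots> = (\<Sum>i\<in>{1..<n}. f i * f (Suc i))"
    using dsum1[OF assms, of "\<lambda>j i. f i * f j"] by (simp add: mult.commute)
  also have "(\<Sum>i\<in>{0..n}. \<Sum>j\<in>{0..n}. ?e3 i j) = f 0 * (\<Sum>j=1..n. f j)"
    using dsum3[where F="\<lambda>i j. f i * f j" and n=n] by (simp add: sum_distrib_left)
  also have "(\<Sum>i\<in>{0..n}. \<Sum>j\<in>{0..n}. ?e4 i j) = (\<Sum>j\<in>{0..n}. \<Sum>i\<in>{0..n}. ?e4 i j)"
    by (rule sum.swap)
  also have "\<dots> = f 0 * (\<Sum>j=1..n. f j)"
    using dsum3[where F="\<lambda>j i. f i * f j" and n=n] by (simp add: sum_distrib_left mult.commute)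
  finally show ?thesis by simp
qed



definition alt :: "nat \<Rightarrow> real" where "alt i = (-1)^(Suc i)"

lemma alt_sq[simp]: "alt i * alt i = 1" by (simp add: alt_def power_mult_distrib[symmetric])
lemma alt_sq2[simp]: "(alt i)^2 = 1" by (simp add: power2_eq_square)
lemma alt_sq3: "alt i * (alt i * x) = x" by (simp add: mult.assoc[symmetric])
lemma alt_Suc: "alt (Suc i) = - alt i" by (simp add: alt_def)

definition den :: "nat \<Rightarrow> (nat \<Rightarrow> real) \<Rightarrow> real" where
  "den N h = (\<Sum>i=1..N. (h i)^2) + (\<Sum>i=1..N. alt i * h i)^2"

lemma Qh_cong: "(\<And>i. i \<in> {1..N} \<Longrightarrow> h i = g i) \<Longrightarrow> Qh N h = Qh N g"
  unfolding Qh_def by (intro arg_cong2[where f="(-)"] arg_cong[where f="(*) 2"] sum.cong) auto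

lemma den_cong: "(\<And>i. i \<in> {1..N} \<Longrightarrow> h i = g i) \<Longrightarrow> den N h = den N g"
  unfolding den_def by (intro arg_cong2[where f="(+)"] arg_cong[where f="\<lambda>x. x^2"] sum.cong) auto

lemma Qh_scale: "Qh N (\<lambda>i. c * h i) = c^2 * Qh N h"
  unfolding Qh_def by (simp add: power_mult_distrib sum_distrib_left algebra_simps power2_eq_square)

lemma value_h:
  assumes n: "n \<ge> 1" and s0: "(\<Sum>i\<in>fan_V n. f i) = 0" and s1: "(\<Sum>i\<in>fan_V n. (f i)^2) = 1"
  shows "(\<Sum>i\<in>fan_V n. \<Sum>j\<in>fan_V n. f i * real (graph_dist (fan_V n) (fan_E n) i j) * f j)
      = - Qh n (\<lambda>i. alt i * f i)"
    and "den n (\<lambda>i. alt i * f i) = 1"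
proof -
  have split: "(\<Sum>i=0..n. g i) = g 0 + (\<Sum>i=1..n. g i)" for g :: "nat \<Rightarrow> real"
    by (simp add: sum.atLeast_Suc_atMost)
  have a: "(\<Sum>i=1..n. f i) = - f 0" using s0 split[of f] by (simp add: fan_V_def)
  have b: "(\<Sum>i=1..n. (f i)^2) = 1 - (f 0)^2" using s1 split[of "\<lambda>i. (f i)^2"] by (simp add: fan_V_def)
  have c: "(\<Sum>i=1..n. (alt i * f i)^2) = 1 - (f 0)^2"
    using b by (simp add: power_mult_distrib)
  have d: "(\<Sum>i\<in>{1..<n}. alt i * f i * (alt (Suc i) * f (Suc i))) = - (\<Sum>i\<in>{1..<n}. f i * f (Suc i))"
  proof -
    have p: "alt i * f i * (alt (Suc i) * f (Suc i)) = - (f i * f (Suc i))" for i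
    proof -
      have "alt i * f i * (- alt i * f (Suc i)) = - ((alt i * alt i) * (f i * f (Suc i)))" by algebra
      then show ?thesis by (simp add: alt_Suc)
    qed
    show ?thesis by (simp add: p sum_negf)
  qed
  have e: "(\<Sum>i=1..n. alt i * (alt i * f i)) = - f 0"
    using a by (simp add: mult.assoc[symmetric])
  show "(\<Sum>i\<in>fan_V n. \<Sum>j\<in>fan_V n. f i * real (graph_dist (fan_V n) (fan_E n) i j) * f j)
      = - Qh n (\<lambda>i. alt i * f i)"
    unfolding value_formula[OF n] Qh_def c d
    using s0 s1 a b by (simp add: fan_V_def algebra_simps power2_eq_square)
  show "den n (\<lambda>i. alt i * f i) = 1"
    unfolding den_def c e by simp
qed

lemma QEC_fan_eq: "n \<ge> 1 \<Longrightarrow> QEC_fan n = Sup {- Qh n (\<lambda>i. alt i * f i) | f.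
      (\<Sum>i\<in>fan_V n. (f i)\<^sup>2) = 1 \<and> (\<Sum>i\<in>fan_V n. f i) = 0}"
  unfolding QEC_fan_def QEC_def
  by (intro arg_cong[where f=Sup] Collect_cong ex_cong1) (auto simp: value_h)

lemma construct:
  assumes n: "n \<ge> 1" and D: "den n h > 0"
  obtains f where "(\<Sum>i\<in>fan_V n. (f i)\<^sup>2) = 1" "(\<Sum>i\<in>fan_V n. f i) = 0"
     "- Qh n (\<lambda>i. alt i * f i) = - Qh n h / den n h"
proof -
  define S where "S = (\<Sum>i=1..n. alt i * h i)"
  define f where "f i = (if i = 0 then - S else alt i * h i) / sqrt (den n h)" for i
  have split: "(\<Sum>i=0..n. g i) = g 0 + (\<Sum>i=1..n. g i)" for g :: "nat \<Rightarrow> real"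
    by (simp add: sum.atLeast_Suc_atMost)
  have sq: "sqrt (den n h) ^ 2 = den n h" using D by simp
  have sD: "sqrt (den n h) > 0" using D by simp
  have f0: "f 0 = - S / sqrt (den n h)" by (simp add: f_def)
  have fr: "(\<Sum>i=1..n. f i) = (\<Sum>i=1..n. alt i * h i / sqrt (den n h))"
    by (rule sum.cong) (auto simp: f_def)
  have fr2: "(\<Sum>i=1..n. (f i)^2) = (\<Sum>i=1..n. (h i)^2 / den n h)"
    by (rule sum.cong) (auto simp: f_def power_divide sq power_mult_distrib)
  have 1: "(\<Sum>i\<in>fan_V n. f i) = 0"
    unfolding fan_V_def split fr f0 S_def sum_divide_distrib[symmetric] by simp
  have "(\<Sum>i\<in>fan_V n. (f i)^2) = (S^2 + (\<Sum>i=1..n. (h i)^2)) / den n h"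
    unfolding fan_V_def split fr2 f0 sum_divide_distrib[symmetric] by (simp add: power_divide sq add_divide_distrib)
  then have 2: "(\<Sum>i\<in>fan_V n. (f i)^2) = 1" using D by (simp add: den_def S_def)
  have "Qh n (\<lambda>i. alt i * f i) = Qh n (\<lambda>i. (1 / sqrt (den n h)) * h i)"
    by (rule Qh_cong) (simp add: f_def mult.assoc[symmetric])
  also have "\<dots> = Qh n h / den n h" using Qh_scale[of n "1 / sqrt (den n h)" h] by (simp add: power_divide sq)
  finally have 3: "- Qh n (\<lambda>i. alt i * f i) = - Qh n h / den n h" by simp
  show ?thesis using 1 2 3 that by blast
qed

lemma QEC_lower:
  assumes n: "n \<ge> 1" and bd: "\<And>h. c0 * den n h \<le> Qh n h" and D: "den n h > 0"
  shows "- Qh n h / den n h \<le> QEC_fan n"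
proof -
  obtain f where f: "(\<Sum>i\<in>fan_V n. (f i)\<^sup>2) = 1" "(\<Sum>i\<in>fan_V n. f i) = 0"
     "- Qh n (\<lambda>i. alt i * f i) = - Qh n h / den n h" using construct[OF n D] by blast
  have bdd: "bdd_above {- Qh n (\<lambda>i. alt i * f i) | f.
      (\<Sum>i\<in>fan_V n. (f i)\<^sup>2) = 1 \<and> (\<Sum>i\<in>fan_V n. f i) = 0}"
  proof (rule bdd_aboveI[where M="-c0"])
    fix x assume "x \<in> {- Qh n (\<lambda>i. alt i * f i) | f.
      (\<Sum>i\<in>fan_V n. (f i)\<^sup>2) = 1 \<and> (\<Sum>i\<in>fan_V n. f i) = 0}"
    then obtain g where g: "(\<Sum>i\<in>fan_V n. (g i)\<^sup>2) = 1" "(\<Sum>i\<in>fan_V n. g i) = 0" "x = - Qh n (\<lambda>i. alt i * g i)"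
      by blast
    have "den n (\<lambda>i. alt i * g i) = 1" using value_h(2)[OF n g(2) g(1)] .
    then show "x \<le> - c0" using bd[of "\<lambda>i. alt i * g i"] g(3) by simp
  qed
  show ?thesis unfolding QEC_fan_eq[OF n]
  proof (rule cSup_upper[OF _ bdd])
    show "- Qh n h / den n h \<in> {- Qh n (\<lambda>i. alt i * f i) | f.
      (\<Sum>i\<in>fan_V n. (f i)\<^sup>2) = 1 \<and> (\<Sum>i\<in>fan_V n. f i) = 0}"
      by (intro CollectI exI[of _ f]) (use f in auto)
  qed
qed

lemma QEC_upper:
  assumes n: "n \<ge> 1" and bd: "\<And>h. c * den n h \<le> Qh n h"
  shows "QEC_fan n \<le> - c"
proof -
  define h0 :: "nat \<Rightarrow> real" where "h0 i = (if i = 1 then 1 else (0::real))" for i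
  have e1: "(\<lambda>i. (h0 i)^2) = h0" by (auto simp: h0_def)
  have e2: "(\<lambda>i. alt i * h0 i) = h0" by (auto simp: h0_def alt_def)
  have e3: "sum h0 {1..n} = 1" using n by (simp add: h0_def sum.delta)
  have "den n h0 = 2" unfolding den_def e1 e2 e3 by simp
  then have D0: "den n h0 > 0" by simp
  obtain f where f: "(\<Sum>i\<in>fan_V n. (f i)\<^sup>2) = 1" "(\<Sum>i\<in>fan_V n. f i) = 0"
     "- Qh n (\<lambda>i. alt i * f i) = - Qh n h0 / den n h0"
    by (rule construct[OF n D0])
  show ?thesis unfolding QEC_fan_eq[OF n]
  proof (rule cSup_least)
    show "{- Qh n (\<lambda>i. alt i * f i) | f.
      (\<Sum>i\<in>fan_V n. (f i)\<^sup>2) = 1 \<and> (\<Sum>i\<in>fan_V n. f i) = 0} \<noteq> {}"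
    proof -
      have "- Qh n (\<lambda>i. alt i * f i) \<in> {- Qh n (\<lambda>i. alt i * f i) | f.
      (\<Sum>i\<in>fan_V n. (f i)\<^sup>2) = 1 \<and> (\<Sum>i\<in>fan_V n. f i) = 0}"
        by (intro CollectI exI[of _ f]) (use f in auto)
      then show ?thesis by auto
    qed
    fix x assume "x \<in> {- Qh n (\<lambda>i. alt i * f i) | f.
      (\<Sum>i\<in>fan_V n. (f i)\<^sup>2) = 1 \<and> (\<Sum>i\<in>fan_V n. f i) = 0}"
    then obtain g where g: "(\<Sum>i\<in>fan_V n. (g i)\<^sup>2) = 1" "(\<Sum>i\<in>fan_V n. g i) = 0" "x = - Qh n (\<lambda>i. alt i * g i)"
      by blast
    have "den n (\<lambda>i. alt i * g i) = 1" using value_h(2)[OF n g(2) g(1)] .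
    then show "x \<le> - c" using bd[of "\<lambda>i. alt i * g i"] g(3) by simp
  qed
qed



lemma trig_i: fixes x y :: real shows "(sin (x+y))^2 - (sin y)^2 = sin x * sin (x + 2*y)"
proof -
  have e: "sin (x + 2*y) = sin x * (cos y ^2 - sin y^2) + cos x * (2 * sin y * cos y)"
    by (simp add: sin_add sin_double cos_double)
  show ?thesis unfolding sin_add sin_double cos_double
    using sin_cos_squared_add[of x] sin_cos_squared_add[of y] by algebra
qed

lemma trig_ii: fixes x y :: real shows "sin x + sin (x + 2*y) = 2 * sin (x+y) * cos y"
proof -
  have e: "sin (x + 2*y) = sin x * (cos y ^2 - sin y^2) + cos x * (2 * sin y * cos y)"
    by (simp add: sin_add sin_double cos_double)
  show ?thesis unfolding sin_add sin_double cos_double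
    using sin_cos_squared_add[of x] sin_cos_squared_add[of y] by algebra
qed

lemma trig_iii: fixes x y :: real shows "sin (2*y) = sin (x + 2*y) * cos x - cos (x + 2*y) * sin x"
  by (metis add_diff_cancel_left' sin_diff)

lemma per_term:
  fixes x y e :: real
  assumes S1: "sin x \<noteq> 0" and S2: "sin (x + 2*y) \<noteq> 0" and c: "cos y \<noteq> 0" and s2: "sin (2*y) \<noteq> 0"
    and e: "e * e = 1"
  shows "(sin y + e * sin (x+y))^2 / (sin x * sin (x + 2*y))
     = 1 + 2 * (sin y)^2 * (cos x / sin x - cos (x + 2*y) / sin (x + 2*y)) / sin (2*y)
         + e * (sin y / cos y) * (1 / sin x + 1 / sin (x + 2*y))"
proof -
  have i: "(sin (x+y))^2 = sin x * sin (x + 2*y) + (sin y)^2" using trig_i[of x y] by simp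
  have ii: "1 / sin x + 1 / sin (x + 2*y) = 2 * sin (x+y) * cos y / (sin x * sin (x + 2*y))"
    using trig_ii[of x y] S1 S2 by (simp add: field_simps)
  have iii: "cos x / sin x - cos (x + 2*y) / sin (x + 2*y) = sin (2*y) / (sin x * sin (x + 2*y))"
    using trig_iii[of y x] S1 S2 by (simp add: field_simps)
  have sq: "(sin y + e * sin (x+y))^2 = (sin y)^2 + (sin (x+y))^2 + 2 * e * sin y * sin (x+y)"
    using e by (simp add: power2_eq_square algebra_simps)
  show ?thesis unfolding ii iii sq i using S1 S2 c s2
    by (simp add: field_simps power2_eq_square)
qed

definition tt :: "nat \<Rightarrow> real" where "tt N = pi / (real N + 1)"
definition uu :: "nat \<Rightarrow> nat \<Rightarrow> real" where "uu N i = sin (real i * tt N)"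
definition mu :: "nat \<Rightarrow> real" where "mu N = 2 - 2 * cos (tt N)"
definition SOS :: "nat \<Rightarrow> (nat \<Rightarrow> real) \<Rightarrow> real" where
  "SOS N h = (\<Sum>j\<in>{1..<N}. uu N j * uu N (Suc j) * (h j / uu N j - h (Suc j) / uu N (Suc j))^2)"
definition BB :: "nat \<Rightarrow> nat \<Rightarrow> real" where "BB N j = (\<Sum>i=1..j. alt i * uu N i)"

lemma tt_pos: "tt N > 0" by (simp add: tt_def)

lemma uu_pos: assumes "1 \<le> i" "i \<le> N" shows "uu N i > 0"
proof -
  have "real i * tt N > 0" using assms tt_pos[of N] by simp
  moreover have "real i * tt N < pi"
  proof -
    have "real i < real N + 1" using assms by simp
    then have "real i * pi < (real N + 1) * pi" by simp
    then show ?thesis by (simp add: tt_def field_simps)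
  qed
  ultimately show ?thesis unfolding uu_def by (rule sin_gt_zero)
qed

lemma uu_0[simp]: "uu N 0 = 0" by (simp add: uu_def)

lemma uu_end: "uu N (Suc N) = 0"
proof -
  have "real (Suc N) * tt N = pi" by (simp add: tt_def add.commute)
  then show ?thesis by (simp add: uu_def)
qed

lemma uu_rec: assumes "1 \<le> i" shows "uu N (i-1) + uu N (Suc i) = (2 - mu N) * uu N i"
proof -
  have a: "real (i-1) * tt N = real i * tt N - tt N" using assms by (simp add: of_nat_diff algebra_simps)
  have b: "real (Suc i) * tt N = real i * tt N + tt N" by (simp add: algebra_simps)
  show ?thesis unfolding uu_def a b mu_def sin_add sin_diff by (simp add: algebra_simps)
qed

lemma gs_N: assumes "N \<ge> 1" shows "Qh N h - mu N * (\<Sum>i=1..N. (h i)^2) = SOS N h"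
proof -
  have "Qh N h - mu N * (\<Sum>i=1..N. (h i)^2) =
     (\<Sum>j\<in>{1..<N}. uu N j * uu N (Suc j) * (h j / uu N j - h (Suc j) / uu N (Suc j))^2) + uu N (Suc N) / uu N N * (h N)^2"
  proof (rule GS)
    show "\<forall>i\<in>{1..N}. uu N i \<noteq> 0" using uu_pos[of _ N] by (metis atLeastAtMost_iff less_irrefl)
  qed (use assms uu_rec in auto)
  then show ?thesis by (simp add: SOS_def uu_end)
qed

lemma SOS_nonneg: "SOS N h \<ge> 0"
  unfolding SOS_def
proof (rule sum_nonneg)
  fix j assume "j \<in> {1..<N}"
  then have "uu N j > 0" "uu N (Suc j) > 0" using uu_pos by auto
  then show "0 \<le> uu N j * uu N (Suc j) * (h j / uu N j - h (Suc j) / uu N (Suc j))\<^sup>2" by simp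
qed

lemma mu_eq: "mu N = 4 * (sin (tt N / 2))^2"
  using cos_double_sin[of "tt N / 2"] by (simp add: mu_def)

lemma BB_closed: "2 * cos (tt N / 2) * BB N j = sin (tt N / 2) + alt j * sin ((real j + 1/2) * tt N)"
proof (induction j)
  case 0 then show ?case by (simp add: BB_def alt_def)
next
  case (Suc j)
  define t where "t = tt N"
  have id: "2 * cos (t/2) * sin (real (Suc j) * t) = sin ((real (Suc j) + 1/2) * t) + sin ((real j + 1/2) * t)"
  proof -
    have e1: "(real (Suc j) + 1/2) * t = real (Suc j) * t + t/2" by (simp add: algebra_simps)
    have e2: "(real j + 1/2) * t = real (Suc j) * t - t/2" by (simp add: algebra_simps)
    show ?thesis unfolding e1 e2 sin_add sin_diff by (simp add: algebra_simps)
  qed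
  have "2 * cos (t / 2) * BB N (Suc j) = 2 * cos (t / 2) * BB N j + alt (Suc j) * (2 * cos (t/2) * sin (real (Suc j) * t))"
    by (simp add: BB_def uu_def t_def algebra_simps)
  also have "\<dots> = sin (t/2) + alt (Suc j) * sin ((real (Suc j) + 1/2) * t)"
    unfolding id using Suc.IH by (simp add: t_def alt_Suc algebra_simps)
  finally show ?case by (simp add: t_def)
qed

lemma t_facts: assumes "N \<ge> 1" shows "sin (tt N) > 0" "cos (tt N / 2) > 0" "sin (tt N / 2) > 0" "tt N \<le> pi/2"
proof -
  have le: "tt N \<le> pi / 2" using assms unfolding tt_def by (simp add: field_simps)
  show "tt N \<le> pi/2" by (fact le)
  show "sin (tt N) > 0" using le tt_pos[of N] by (intro sin_gt_zero) auto
  show "cos (tt N / 2) > 0" using le tt_pos[of N] by (intro cos_gt_zero) auto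
  show "sin (tt N / 2) > 0" using le tt_pos[of N] by (intro sin_gt_zero) auto
qed

lemma T_sum:
  assumes N: "N \<ge> 1" and k: "Suc k \<le> N"
  shows "(\<Sum>j=1..k. (2*cos(tt N/2)*BB N j)^2/(uu N j * uu N (Suc j)))
    = real k + 2*(sin(tt N/2))^2*(cos(tt N)/sin(tt N) - cos(real (Suc k)*tt N)/sin(real (Suc k)*tt N))/sin(tt N)
      + (sin (tt N/2) / cos(tt N/2)) * (1 / sin (tt N) + alt k / sin (real (Suc k) * tt N))"
  using k
proof (induction k)
  case 0 then show ?case by (simp add: alt_def)
next
  case (Suc k)
  define t where "t = tt N"
  have IH: "(\<Sum>j=1..k. (2*cos(t/2)*BB N j)^2/(uu N j * uu N (Suc j)))
    = real k + 2*(sin(t/2))^2*(cos(t)/sin(t) - cos(real (Suc k)*t)/sin(real (Suc k)*t))/sin(t)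
      + (sin (t/2) / cos(t/2)) * (1 / sin (t) + alt k / sin (real (Suc k) * t))"
    using Suc by (simp add: t_def)
  have pos1: "sin (real (Suc k) * t) \<noteq> 0" using uu_pos[of "Suc k" N] Suc.prems by (simp add: uu_def t_def)
  have pos2: "sin (real (Suc (Suc k)) * t) \<noteq> 0" using uu_pos[of "Suc (Suc k)" N] Suc.prems by (simp add: uu_def t_def)
  have c: "cos (t/2) \<noteq> 0" "sin t \<noteq> 0" using t_facts[OF N] by (auto simp: t_def)
  have e: "alt (Suc k) * alt (Suc k) = 1" by simp
  have a1: "real (Suc k) * t + t = real (Suc (Suc k)) * t" by (simp add: algebra_simps)
  have a2: "real (Suc k) * t + t/2 = (real (Suc k) + 1/2) * t" by (simp add: algebra_simps)
  have a3: "2 * (t/2) = t" by simp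
  have pt: "(sin (t/2) + alt (Suc k) * sin ((real (Suc k) + 1/2) * t))^2 / (sin (real (Suc k) * t) * sin (real (Suc (Suc k)) * t))
     = 1 + 2 * (sin (t/2))^2 * (cos (real (Suc k) * t) / sin (real (Suc k) * t) - cos (real (Suc (Suc k)) * t) / sin (real (Suc (Suc k)) * t)) / sin t
         + alt (Suc k) * (sin (t/2) / cos (t/2)) * (1 / sin (real (Suc k) * t) + 1 / sin (real (Suc (Suc k)) * t))"
    using per_term[of "real (Suc k) * t" "t/2" "alt (Suc k)", unfolded a3, unfolded a1 a2] pos1 pos2 c e by blast
  have bb: "2*cos(t/2)*BB N (Suc k) = sin (t/2) + alt (Suc k) * sin ((real (Suc k) + 1/2) * t)"
    using BB_closed[of N "Suc k"] by (simp add: t_def)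
  have "(\<Sum>j=1..Suc k. (2*cos(t/2)*BB N j)^2/(uu N j * uu N (Suc j)))
      = (\<Sum>j=1..k. (2*cos(t/2)*BB N j)^2/(uu N j * uu N (Suc j))) + (2*cos(t/2)*BB N (Suc k))^2/(uu N (Suc k) * uu N (Suc (Suc k)))"
    by simp
  also have "\<dots> = real (Suc k) + 2*(sin(t/2))^2*(cos(t)/sin(t) - cos(real (Suc (Suc k))*t)/sin(real (Suc (Suc k))*t))/sin(t)
      + (sin (t/2) / cos(t/2)) * (1 / sin (t) + alt (Suc k) / sin (real (Suc (Suc k)) * t))"
  proof -
    have u1: "uu N (Suc k) = sin(real (Suc k) * t)" "uu N (Suc (Suc k)) = sin(real (Suc (Suc k)) * t)"
      by (simp_all add: uu_def t_def)
    have "(\<Sum>j=1..k. (2*cos(t/2)*BB N j)^2/(uu N j * uu N (Suc j))) + (2*cos(t/2)*BB N (Suc k))^2/(uu N (Suc k) * uu N (Suc (Suc k)))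
      = real k + 2*(sin(t/2))^2*(cos(t)/sin(t) - cos(real (Suc k)*t)/sin(real (Suc k)*t))/sin(t)
      + (sin (t/2) / cos(t/2)) * (1 / sin (t) + alt k / sin (real (Suc k) * t))
      + (1 + 2 * (sin (t/2))^2 * (cos (real (Suc k) * t) / sin (real (Suc k) * t) - cos (real (Suc (Suc k)) * t) / sin (real (Suc (Suc k)) * t)) / sin t
         + alt (Suc k) * (sin (t/2) / cos (t/2)) * (1 / sin (real (Suc k) * t) + 1 / sin (real (Suc (Suc k)) * t)))"
      by (simp only: IH bb u1 pt)
    also have "\<dots> = real (Suc k) + 2*(sin(t/2))^2*(cos(t)/sin(t) - cos(real (Suc (Suc k))*t)/sin(real (Suc (Suc k))*t))/sin(t)
      + (sin (t/2) / cos(t/2)) * (1 / sin (t) + alt (Suc k) / sin (real (Suc (Suc k)) * t))"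
      unfolding alt_Suc by (simp add: algebra_simps diff_divide_distrib add_divide_distrib)
    finally show ?thesis .
  qed
  finally show ?case by (simp add: t_def)
qed

lemma Nt: "real N * tt N = pi - tt N"
  by (simp add: tt_def field_simps)

lemma Nht: "(real N + 1/2) * tt N = pi - tt N / 2"
  by (simp add: tt_def field_simps)

lemma alt_even: "even N \<Longrightarrow> alt N = -1" by (simp add: alt_def)
lemma alt_odd: "odd N \<Longrightarrow> alt N = 1" by (simp add: alt_def)

lemma BB_N_even: assumes "N \<ge> 1" "even N" shows "BB N N = 0"
proof -
  have "2 * cos (tt N / 2) * BB N N = 0" using BB_closed[of N N] alt_even[OF assms(2)] by (simp add: Nht)
  then show ?thesis using t_facts[OF assms(1)] by simp
qed

lemma BB_N_odd: assumes "N \<ge> 1" "odd N" shows "BB N N = sin (tt N / 2) / cos (tt N / 2)"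
proof -
  have "2 * cos (tt N / 2) * BB N N = 2 * sin (tt N / 2)" using BB_closed[of N N] alt_odd[OF assms(2)] by (simp add: Nht)
  then show ?thesis using t_facts[OF assms(1)] by (simp add: field_simps)
qed

lemma T_even:
  assumes N: "N \<ge> 2" and ev: "even N"
  shows "(\<Sum>j\<in>{1..<N}. (BB N j)^2 / (uu N j * uu N (Suc j))) = (real N + 1) / (4 * (cos (tt N / 2))^2)"
proof -
  have N1: "N \<ge> 1" using N by simp
  define t where "t = tt N"
  define a where "a = sin (t/2)"
  define c where "c = cos (t/2)"
  have c0: "c > 0" "a > 0" "sin t > 0" using t_facts[OF N1] by (auto simp: a_def c_def t_def)
  have st: "sin t = 2 * a * c" using sin_double[of "t/2"] by (simp add: a_def c_def)
  have ct: "cos t = 1 - 2 * a^2" using cos_double_sin[of "t/2"] by (simp add: a_def)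
  have ac: "a^2 + c^2 = 1" by (simp add: a_def c_def)
  have k: "Suc (N - 1) \<le> N" using N by simp
  note TS = T_sum[OF N1 k]
  have SN: "real (Suc (N - 1)) = real N" using N by simp
  have altN: "alt (N - 1) = 1" using ev N by (intro alt_odd) auto
  have F: "(\<Sum>j=1..N-1. (2*c*BB N j)^2/(uu N j * uu N (Suc j)))
      = real (N - 1) + 2*a^2*(cos t/sin t - cos (pi - t)/sin (pi - t))/sin t + (a / c) * (1 / sin t + 1 / sin (pi - t))"
    using TS unfolding SN Nt altN by (simp add: t_def a_def c_def)
  also have "\<dots> = real N + 1"
  proof -
    have "real (N - 1) = real N - 1" using N by (simp add: of_nat_diff)
    moreover have "2*a^2*(cos t/sin t - cos (pi - t)/sin (pi - t))/sin t + (a / c) * (1 / sin t + 1 / sin (pi - t)) = 2"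
      unfolding sin_pi_minus cos_pi_minus st ct using c0 ac by (simp add: field_simps power2_eq_square) algebra
    ultimately show ?thesis by simp
  qed
  finally have F2: "(\<Sum>j=1..N-1. (2*c*BB N j)^2/(uu N j * uu N (Suc j))) = real N + 1" .
  have set: "{1..<N} = {1..N-1}" using N by auto
  have "(\<Sum>j\<in>{1..<N}. (BB N j)^2 / (uu N j * uu N (Suc j))) = (\<Sum>j=1..N-1. (2*c*BB N j)^2/(uu N j * uu N (Suc j))) / (4 * c^2)"
    unfolding set sum_divide_distrib using c0 by (intro sum.cong refl) (simp add: power_mult_distrib field_simps)
  then show ?thesis unfolding F2 by (simp add: c_def t_def)
qed



lemma abel: "(\<Sum>i=1..N. c i * r i) = (\<Sum>j\<in>{1..<N}. (\<Sum>i=1..j. c i) * (r j - r (Suc j))) + (\<Sum>i=1..N. (c i :: real)) * r N"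
proof (induction N)
  case 0 then show ?case by simp
next
  case (Suc N)
  show ?case
  proof (cases "N = 0")
    case True then show ?thesis by simp
  next
    case False
    have "{1..<Suc N} = insert N {1..<N}" using False by auto
    then have e: "(\<Sum>j\<in>{1..<Suc N}. (\<Sum>i=1..j. c i) * (r j - r (Suc j)))
       = (\<Sum>j\<in>{1..<N}. (\<Sum>i=1..j. c i) * (r j - r (Suc j))) + (\<Sum>i=1..N. c i) * (r N - r (Suc N))"
      by simp
    show ?thesis unfolding e using Suc.IH by (simp add: algebra_simps)
  qed
qed

lemma wcs:
  fixes w B d :: "nat \<Rightarrow> real"
  assumes "\<And>j. j \<in> A \<Longrightarrow> w j > 0"
  shows "(\<Sum>j\<in>A. B j * d j)^2 \<le> (\<Sum>j\<in>A. w j * (d j)^2) * (\<Sum>j\<in>A. (B j)^2 / w j)"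
proof -
  have "(\<Sum>j\<in>A. (B j / sqrt (w j)) * (sqrt (w j) * d j))^2
     \<le> (\<Sum>j\<in>A. (B j / sqrt (w j))^2) * (\<Sum>j\<in>A. (sqrt (w j) * d j)^2)"
    by (rule Cauchy_Schwarz_ineq_sum)
  moreover have "(\<Sum>j\<in>A. (B j / sqrt (w j)) * (sqrt (w j) * d j)) = (\<Sum>j\<in>A. B j * d j)"
    using assms by (intro sum.cong refl) (simp add: less_imp_neq[symmetric])
  moreover have "(\<Sum>j\<in>A. (B j / sqrt (w j))^2) = (\<Sum>j\<in>A. (B j)^2 / w j)"
    using assms by (intro sum.cong refl) (simp add: power_divide less_imp_le)
  moreover have "(\<Sum>j\<in>A. (sqrt (w j) * d j)^2) = (\<Sum>j\<in>A. w j * (d j)^2)"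
    using assms by (intro sum.cong refl) (simp add: power_mult_distrib less_imp_le)
  ultimately show ?thesis by (simp add: mult.commute)
qed

definition alpha :: "nat \<Rightarrow> real" where
  "alpha N = (real N + 1) * (sin (tt N / 2) / cos (tt N / 2))^2"
definition Tp :: "nat \<Rightarrow> real" where
  "Tp N = (real N + 1) / (4 * (cos (tt N / 2))^2)"

lemma muTp: "N \<ge> 1 \<Longrightarrow> mu N * Tp N = alpha N"
  unfolding mu_eq Tp_def alpha_def using t_facts[of N] by (simp add: field_simps power2_eq_square)

lemma s_bound:
  assumes N: "N \<ge> 2" and ev: "even N"
  shows "(\<Sum>i=1..N. alt i * h i)^2 \<le> SOS N h * Tp N"
proof -
  have N1: "N \<ge> 1" using N by simp
  define r where "r i = h i / uu N i" for i
  have ur: "alt i * h i = (alt i * uu N i) * r i" if "i \<in> {1..N}" for i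
    using uu_pos[of i N] that by (simp add: r_def)
  have "(\<Sum>i=1..N. alt i * h i) = (\<Sum>i=1..N. (alt i * uu N i) * r i)"
    by (rule sum.cong) (simp_all add: ur)
  also have "\<dots> = (\<Sum>j\<in>{1..<N}. BB N j * (r j - r (Suc j))) + BB N N * r N"
    unfolding abel BB_def ..
  also have "\<dots> = (\<Sum>j\<in>{1..<N}. BB N j * (r j - r (Suc j)))"
    using BB_N_even[OF N1 ev] by simp
  finally have s: "(\<Sum>i=1..N. alt i * h i) = (\<Sum>j\<in>{1..<N}. BB N j * (r j - r (Suc j)))" .
  have "(\<Sum>j\<in>{1..<N}. BB N j * (r j - r (Suc j)))^2 \<le>
     (\<Sum>j\<in>{1..<N}. (uu N j * uu N (Suc j)) * (r j - r (Suc j))^2) * (\<Sum>j\<in>{1..<N}. (BB N j)^2 / (uu N j * uu N (Suc j)))"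
    by (rule wcs) (use uu_pos in auto)
  also have "(\<Sum>j\<in>{1..<N}. (uu N j * uu N (Suc j)) * (r j - r (Suc j))^2) = SOS N h"
    unfolding SOS_def r_def ..
  also have "(\<Sum>j\<in>{1..<N}. (BB N j)^2 / (uu N j * uu N (Suc j))) = Tp N"
    unfolding T_even[OF N ev] Tp_def ..
  finally show ?thesis unfolding s .
qed

lemma even_core:
  assumes N: "N \<ge> 2" and ev: "even N"
  shows "Qh N h - mu N * den N h \<ge> (1 - alpha N) * SOS N h"
proof -
  have N1: "N \<ge> 1" using N by simp
  have "mu N * (\<Sum>i=1..N. alt i * h i)^2 \<le> mu N * (SOS N h * Tp N)"
    using s_bound[OF N ev, of h] by (rule mult_left_mono) (simp add: mu_eq)
  also have "\<dots> = alpha N * SOS N h" using muTp[OF N1] by (simp add: algebra_simps)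
  finally have m: "mu N * (\<Sum>i=1..N. alt i * h i)^2 \<le> alpha N * SOS N h" .
  have "Qh N h - mu N * den N h = SOS N h - mu N * (\<Sum>i=1..N. alt i * h i)^2"
    using gs_N[OF N1, of h] unfolding den_def by (simp add: algebra_simps)
  then show ?thesis using m by (simp add: algebra_simps)
qed



lemma alpha_2: "alpha 2 = 1"
proof -
  have e: "tt 2 / 2 = pi / 6" by (simp add: tt_def)
  show ?thesis unfolding alpha_def e sin_30 cos_30 by (simp add: power_divide)
qed

lemma cos_lb: fixes y :: real assumes "y \<ge> 0" shows "cos y \<ge> 1 - y^2/2"
proof -
  have c: "cos y = 1 - 2 * (sin (y/2))^2" using cos_double_sin[of "y/2"] by simp
  have "\<bar>sin (y/2)\<bar> \<le> \<bar>y/2\<bar>" by (rule abs_sin_x_le_abs_x)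
  then have "(sin (y/2))^2 \<le> (y/2)^2" by (simp only: abs_le_square_iff)
  then show ?thesis unfolding c by (simp add: power_divide)
qed

lemma alpha_lt: assumes N: "N \<ge> 4" shows "alpha N < 1"
proof -
  define y where "y = tt N / 2"
  have ypos: "y > 0" using tt_pos[of N] by (simp add: y_def)
  have Ny: "real N + 1 = pi / (2 * y)" by (simp add: y_def tt_def)
  have "real N + 1 \<ge> 5" using N by simp
  then have "y \<le> pi / 10" unfolding y_def tt_def by (simp add: field_simps)
  then have y4: "y < 2/5" using pi_less_4 by simp
  have sy: "sin y \<le> y" using ypos by (intro sin_x_le_x) simp
  have sy0: "sin y > 0" using t_facts[of N] N by (simp add: y_def)
  have cy: "cos y \<ge> 1 - y^2/2" using ypos by (intro cos_lb) simp
  have "y^2 < (2/5)^2" using y4 ypos by (intro power_strict_mono) auto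
  then have "y^2 < 4/25" by (simp add: power_divide)
  then have cy2: "cos y \<ge> 23/25" using cy by simp
  have "(real N + 1) * (sin y)^2 \<le> (real N + 1) * y^2"
    using sy sy0 by (intro mult_left_mono power_mono) auto
  also have "\<dots> = pi * y / 2" unfolding Ny using ypos by (simp add: power2_eq_square field_simps)
  also have "\<dots> < 4 * (2/5) / 2"
  proof -
    have "pi * y < 4 * (2/5)" using pi_less_4 y4 ypos by (intro mult_strict_mono) auto
    then show ?thesis by simp
  qed
  also have "\<dots> < (23/25)^2" by (simp add: power2_eq_square)
  also have "\<dots> \<le> (cos y)^2" using cy2 by (intro power_mono) auto
  finally have "(real N + 1) * (sin y)^2 < (cos y)^2" .
  moreover have "cos y > 0" using cy2 by simp
  ultimately show ?thesis unfolding alpha_def y_def[symmetric]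
    by (simp add: power_divide field_simps)
qed

lemma alpha_le: assumes "N \<ge> 2" "even N" shows "alpha N \<le> 1"
proof (cases "N \<ge> 4")
  case True then show ?thesis using alpha_lt by (simp add: less_imp_le)
next
  case False
  then have "N = 2 \<or> N = 3" using assms(1) by auto
  then have "N = 2" using assms(2) by auto
  then show ?thesis using alpha_2 by simp
qed

definition wmin :: "nat \<Rightarrow> real" where
  "wmin n = Min ((\<lambda>j. uu n j * uu n (Suc j)) ` {1..<n})"

lemma wmin_pos: assumes "n \<ge> 2" shows "wmin n > 0"
proof -
  have ne: "(\<lambda>j. uu n j * uu n (Suc j)) ` {1..<n} \<noteq> {}" using assms by auto
  have "\<forall>x\<in>(\<lambda>j. uu n j * uu n (Suc j)) ` {1..<n}. x > 0"
    using uu_pos by (auto intro!: mult_pos_pos)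
  then show ?thesis unfolding wmin_def using Min_in[OF finite_imageI[OF finite_atLeastLessThan] ne] by blast
qed

lemma wmin_le: "j \<in> {1..<n} \<Longrightarrow> wmin n \<le> uu n j * uu n (Suc j)"
  unfolding wmin_def by (rule Min_le) auto

lemma coercive:
  assumes n: "n \<ge> 2" and hn: "h n = 0"
  shows "(\<Sum>i=1..n. (h i)^2) \<le> (real n)^2 / wmin n * SOS n h"
proof -
  define r where "r i = h i / uu n i" for i
  define d where "d j = r j - r (Suc j)" for j
  define D where "D = (\<Sum>j\<in>{1..<n}. (d j)^2)"
  have wp: "wmin n > 0" using wmin_pos[OF n] .
  have rn: "r n = 0" using hn by (simp add: r_def)
  have D0: "D \<ge> 0" unfolding D_def by (simp add: sum_nonneg)
  have "wmin n * D = (\<Sum>j\<in>{1..<n}. wmin n * (d j)^2)" unfolding D_def by (simp add: sum_distrib_left)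
  also have "\<dots> \<le> (\<Sum>j\<in>{1..<n}. uu n j * uu n (Suc j) * (d j)^2)"
    by (intro sum_mono mult_right_mono wmin_le) auto
  also have "\<dots> = SOS n h" unfolding SOS_def d_def r_def ..
  finally have DS: "wmin n * D \<le> SOS n h" .
  have ri: "(h i)^2 \<le> real n * D" if i: "i \<in> {1..n}" for i
  proof -
    have "(\<Sum>j=i..<n. (- r (Suc j)) - (- r j)) = - r n - (- r i)"
      using i by (intro sum_Suc_diff') auto
    then have rsum: "r i = (\<Sum>j\<in>{i..<n}. d j)" using rn by (simp add: d_def)
    have "(r i)^2 \<le> (\<Sum>j\<in>{i..<n}. (d j)^2) * card {i..<n}"
      unfolding rsum by (rule sum_squared_le_sum_of_squares)
    also have "\<dots> \<le> D * real n"
    proof (rule mult_mono)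
      show "(\<Sum>j\<in>{i..<n}. (d j)^2) \<le> D" unfolding D_def using i by (intro sum_mono2) auto
      show "real (card {i..<n}) \<le> real n" by simp
    qed (use D0 in auto)
    finally have rr: "(r i)^2 \<le> real n * D" by (simp add: mult.commute)
    have u: "uu n i \<noteq> 0" using uu_pos[of i n] i by auto
    have u1: "(uu n i)^2 \<le> 1" unfolding uu_def
      using sin_cos_squared_add[of "real i * tt n"] zero_le_power2[of "cos (real i * tt n)"] by linarith
    have "(h i)^2 = (uu n i)^2 * (r i)^2" using u by (simp add: r_def power_divide)
    also have "(uu n i)^2 * (r i)^2 \<le> 1 * (r i)^2"
      by (intro mult_right_mono u1) auto
    finally show ?thesis using rr by simp
  qed
  have "(\<Sum>i=1..n. (h i)^2) \<le> (\<Sum>i=1..n. real n * D)" by (rule sum_mono) (use ri in auto)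
  also have "\<dots> = (real n)^2 * D" by (simp add: power2_eq_square)
  also have "\<dots> \<le> (real n)^2 / wmin n * SOS n h"
  proof -
    have "(real n)^2 * (wmin n * D) \<le> (real n)^2 * SOS n h" using DS by (intro mult_left_mono) auto
    then show ?thesis using wp by (simp add: field_simps)
  qed
  finally show ?thesis .
qed



lemma SOS_uu: "SOS N (uu N) = 0"
  unfolding SOS_def by (rule sum.neutral) (use uu_pos in \<open>auto simp: less_imp_neq[symmetric]\<close>)

lemma sumsq_pos: assumes "N \<ge> 1" shows "(\<Sum>i=1..N. (uu N i)^2) > 0"
proof -
  have "(uu N 1)^2 \<le> (\<Sum>i=1..N. (uu N i)^2)" using assms by (intro member_le_sum) auto
  moreover have "(uu N 1)^2 > 0" using uu_pos[of 1 N] assms by simp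
  ultimately show ?thesis by linarith
qed

lemma mu_pos: "N \<ge> 1 \<Longrightarrow> mu N > 0"
  unfolding mu_eq using t_facts(3)[of N] by simp

lemma QEC_even: assumes N: "N \<ge> 2" and ev: "even N" shows "QEC_fan N = - mu N"
proof (rule antisym)
  have N1: "N \<ge> 1" using N by simp
  have bd: "mu N * den N h \<le> Qh N h" for h
  proof -
    have "(1 - alpha N) * SOS N h \<ge> 0" using alpha_le[OF N ev] SOS_nonneg[of N h] by simp
    then show ?thesis using even_core[OF N ev, of h] by simp
  qed
  show "QEC_fan N \<le> - mu N" by (rule QEC_upper[OF N1 bd])
  have Q: "Qh N (uu N) = mu N * (\<Sum>i=1..N. (uu N i)^2)" using gs_N[OF N1, of "uu N"] SOS_uu by simp
  have D: "den N (uu N) = (\<Sum>i=1..N. (uu N i)^2)" unfolding den_def BB_def[symmetric] BB_N_even[OF N1 ev] by simp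
  have "- Qh N (uu N) / den N (uu N) \<le> QEC_fan N"
    by (rule QEC_lower[OF N1 bd]) (use sumsq_pos[OF N1] in \<open>simp add: D\<close>)
  then show "- mu N \<le> QEC_fan N" unfolding Q D using sumsq_pos[OF N1] by simp
qed

lemma Qh_ext: "Qh (Suc N) (h(Suc N := 0)) = Qh N h"
proof -
  have a0: "(\<Sum>i=1..N. ((h(Suc N := 0)) i)^2) = (\<Sum>i=1..N. (h i)^2)" by (rule sum.cong) auto
  have a: "(\<Sum>i=1..Suc N. ((h(Suc N := 0)) i)^2) = (\<Sum>i=1..N. (h i)^2)"
    using a0 by (simp add: sum.cl_ivl_Suc)
  have b: "(\<Sum>i\<in>{1..<Suc N}. (h(Suc N := 0)) i * (h(Suc N := 0)) (Suc i)) = (\<Sum>i\<in>{1..<N}. h i * h (Suc i))"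
  proof (cases "N = 0")
    case True then show ?thesis by simp
  next
    case False
    have st: "{1..<Suc N} = insert N {1..<N}" using False by auto
    have c: "(\<Sum>i\<in>{1..<N}. (h(Suc N := 0)) i * (h(Suc N := 0)) (Suc i)) = (\<Sum>i\<in>{1..<N}. h i * h (Suc i))"
      by (rule sum.cong) auto
    show ?thesis unfolding st using c by simp
  qed
  show ?thesis unfolding Qh_def a b ..
qed

lemma den_ext: "den (Suc N) (h(Suc N := 0)) = den N h"
proof -
  have a0: "(\<Sum>i=1..N. ((h(Suc N := 0)) i)^2) = (\<Sum>i=1..N. (h i)^2)" by (rule sum.cong) auto
  have a: "(\<Sum>i=1..Suc N. ((h(Suc N := 0)) i)^2) = (\<Sum>i=1..N. (h i)^2)"
    using a0 by (simp add: sum.cl_ivl_Suc)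
  have b0: "(\<Sum>i=1..N. alt i * (h(Suc N := 0)) i) = (\<Sum>i=1..N. alt i * h i)" by (rule sum.cong) auto
  have b: "(\<Sum>i=1..Suc N. alt i * (h(Suc N := 0)) i) = (\<Sum>i=1..N. alt i * h i)"
    using b0 by (simp add: sum.cl_ivl_Suc)
  show ?thesis unfolding den_def a b ..
qed

lemma odd_bound:
  assumes N: "N \<ge> 3" and od: "odd N"
  obtains \<delta> where "\<delta> > 0" "\<And>h. (mu (Suc N) + \<delta>) * den N h \<le> Qh N h"
proof -
  define n where "n = Suc N"
  have n2: "n \<ge> 2" and n4: "n \<ge> 4" and ev: "even n" using N od by (auto simp: n_def)
  define K where "K = (real n)^2 / wmin n"
  have K0: "K \<ge> 0" using wmin_pos[OF n2] by (simp add: K_def)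
  have Tp0: "Tp n > 0" unfolding Tp_def using t_facts(2)[of n] n2 by simp
  have a1: "alpha n < 1" using alpha_lt[OF n4] .
  define \<delta> where "\<delta> = (1 - alpha n) / (K + Tp n)"
  have dpos: "\<delta> > 0" using K0 Tp0 a1 by (simp add: \<delta>_def)
  have "(mu n + \<delta>) * den N h \<le> Qh N h" for h
  proof -
    define g where "g = h(n := 0)"
    have Qg: "Qh n g = Qh N h" unfolding g_def n_def by (rule Qh_ext)
    have Dg: "den n g = den N h" unfolding g_def n_def by (rule den_ext)
    have gn: "g n = 0" by (simp add: g_def)
    have c1: "Qh n g - mu n * den n g \<ge> (1 - alpha n) * SOS n g" by (rule even_core[OF n2 ev])
    have c2: "(\<Sum>i=1..n. (g i)^2) \<le> K * SOS n g" unfolding K_def by (rule coercive[of n g, OF n2 gn])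
    have c3: "(\<Sum>i=1..n. alt i * g i)^2 \<le> SOS n g * Tp n" by (rule s_bound[OF n2 ev])
    have "den n g \<le> (K + Tp n) * SOS n g" using c2 c3 unfolding den_def by (simp add: algebra_simps)
    then have "\<delta> * den n g \<le> \<delta> * ((K + Tp n) * SOS n g)" using dpos by (intro mult_left_mono) auto
    also have "\<dots> = (1 - alpha n) * SOS n g" using K0 Tp0 by (simp add: \<delta>_def)
    finally show ?thesis using c1 unfolding Qg Dg by (simp add: algebra_simps)
  qed
  then show ?thesis using that dpos by (simp add: n_def)
qed

lemma QEC_odd_upper: assumes N: "N \<ge> 3" and od: "odd N" shows "QEC_fan N < - mu (Suc N)"
proof -
  obtain \<delta> where d: "\<delta> > 0" "\<And>h. (mu (Suc N) + \<delta>) * den N h \<le> Qh N h" using odd_bound[OF N od] by blast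
  have "QEC_fan N \<le> - (mu (Suc N) + \<delta>)" using N by (intro QEC_upper d(2)) auto
  then show ?thesis using d(1) by simp
qed

lemma QEC_odd_lower: assumes N: "N \<ge> 3" and od: "odd N" shows "- mu N < QEC_fan N"
proof -
  have N1: "N \<ge> 1" using N by simp
  obtain \<delta> where d: "\<delta> > 0" "\<And>h. (mu (Suc N) + \<delta>) * den N h \<le> Qh N h" using odd_bound[OF N od] by blast
  define S where "S = (\<Sum>i=1..N. (uu N i)^2)"
  define B where "B = BB N N"
  have Sp: "S > 0" using sumsq_pos[OF N1] by (simp add: S_def)
  have Bp: "B^2 > 0" using BB_N_odd[OF N1 od] t_facts[OF N1] by (simp add: B_def)
  have Q: "Qh N (uu N) = mu N * S" using gs_N[OF N1, of "uu N"] SOS_uu by (simp add: S_def)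
  have D: "den N (uu N) = S + B^2" unfolding den_def BB_def[symmetric] by (simp add: S_def B_def)
  have "- Qh N (uu N) / den N (uu N) \<le> QEC_fan N"
    by (rule QEC_lower[OF N1 d(2)]) (use Sp Bp D in \<open>simp add: add_pos_pos\<close>)
  moreover have "- mu N < - Qh N (uu N) / den N (uu N)"
  proof -
    have m: "mu N > 0" using mu_pos[OF N1] .
    have "mu N * S < mu N * (S + B^2)" using m Bp by simp
    moreover have pos: "S + B^2 > 0" using Sp Bp by linarith
    ultimately have "mu N * S / (S + B^2) < mu N" by (simp add: pos_divide_less_eq)
    then show ?thesis unfolding Q D by simp
  qed
  ultimately show ?thesis by linarith
qed

lemma QEC_3: "QEC_fan 3 = - 1/2"
proof (rule antisym)
  have s3: "(\<Sum>i=1..3. g i) = g 1 + g 2 + g (3::nat)" for g :: "nat \<Rightarrow> real"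
    by (simp add: numeral_3_eq_3 numeral_2_eq_2)
  have s3': "(\<Sum>i\<in>{1..<3}. g i) = g 1 + g (2::nat)" for g :: "nat \<Rightarrow> real"
    by (simp add: numeral_3_eq_3 numeral_2_eq_2)
  have a: "alt 1 = 1" "alt 2 = -1" "alt 3 = 1" by (simp_all add: alt_def)
  have bd: "(1/2) * den 3 h \<le> Qh 3 h" for h
  proof -
    have e: "Suc 1 = 2" "Suc 2 = 3" by simp_all
    have "2 * Qh 3 h - den 3 h = (h 1 - h 2)^2 + (h 2 - h 3)^2 + (h 1 - h 3)^2"
      unfolding Qh_def den_def s3 s3' a e by algebra
    moreover have "(h 1 - h 2)^2 + (h 2 - h 3)^2 + (h 1 - h 3)^2 \<ge> 0" by simp
    ultimately show ?thesis by linarith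
  qed
  show "QEC_fan 3 \<le> - 1/2" using QEC_upper[of 3 "1/2", OF _ bd] by simp
  define h1 :: "nat \<Rightarrow> real" where "h1 i = 1" for i
  have Q: "Qh 3 h1 = 2" unfolding Qh_def s3 s3' h1_def by simp
  have D: "den 3 h1 = 4" unfolding den_def s3 h1_def a by simp
  have "- Qh 3 h1 / den 3 h1 \<le> QEC_fan 3" by (rule QEC_lower[of 3 "1/2", OF _ bd]) (simp_all add: D)
  then show "- 1/2 \<le> QEC_fan 3" unfolding Q D by simp
qed



lemma mu_form: "mu N = 4 * (sin (pi / (2 * (real N + 1))))^2"
proof -
  have e: "tt N / 2 = pi / (2 * (real N + 1))" by (simp add: tt_def)
  show ?thesis unfolding mu_eq e ..
qed

lemma mu_decr: assumes "N \<ge> 1" shows "mu (Suc N) < mu N"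
proof -
  have a: "tt (Suc N) / 2 < tt N / 2" unfolding tt_def by (simp add: frac_less2)
  have b: "tt N / 2 \<le> pi / 2" using t_facts(4)[OF assms] pi_gt_zero tt_pos[of N] by linarith
  have c: "0 < tt (Suc N) / 2" using tt_pos by simp
  have "sin (tt (Suc N) / 2) < sin (tt N / 2)"
    using a b c by (intro sin_monotone_2pi) auto
  moreover have "0 \<le> sin (tt (Suc N) / 2)" using t_facts(3)[of "Suc N"] by simp
  ultimately have "(sin (tt (Suc N) / 2))^2 < (sin (tt N / 2))^2" by (intro power_strict_mono) auto
  then show ?thesis unfolding mu_eq by simp
qed

lemma mu_lim: "mu \<longlonglongrightarrow> 0"
proof -
  have lim: "(\<lambda>n. pi * inverse (real (Suc n))) \<longlonglongrightarrow> pi * 0"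
    by (intro tendsto_mult tendsto_const LIMSEQ_inverse_real_of_nat)
  have eq: "tt = (\<lambda>n. pi * inverse (real (Suc n)))" by (auto simp: tt_def fun_eq_iff divide_inverse add.commute)
  have t: "tt \<longlonglongrightarrow> 0" unfolding eq using lim by (simp only: mult_zero_right)
  have "(\<lambda>n. 2 - 2 * cos (tt n)) \<longlonglongrightarrow> 2 - 2 * cos 0"
    by (intro tendsto_diff tendsto_mult tendsto_const tendsto_cos t)
  then show ?thesis by (simp add: mu_def[abs_def])
qed

theorem mainTheorem10:
  shows "(\<forall>n::nat. n \<ge> 1 \<longrightarrow>
            QEC_fan (2*n) = - 4 * (sin (pi / (2 * (2 * real n + 1))))\<^sup>2
          \<and> - 4 * (sin (pi / (2 * (2 * real n + 2))))\<^sup>2 < QEC_fan (2*n+1)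
          \<and> QEC_fan (2*n+1) < - 4 * (sin (pi / (2 * (2 * real n + 3))))\<^sup>2)
       \<and> QEC_fan 3 = - 1/2
       \<and> (\<forall>n::nat. n \<ge> 3 \<longrightarrow> QEC_fan n < QEC_fan (Suc n))
       \<and> (QEC_fan \<longlonglongrightarrow> 0)"
proof (intro conjI allI impI)
  fix n :: nat assume n: "n \<ge> 1"
  have e1: "QEC_fan (2*n) = - mu (2*n)" using n by (intro QEC_even) auto
  show "QEC_fan (2*n) = - 4 * (sin (pi / (2 * (2 * real n + 1))))\<^sup>2"
  proof -
    have arg: "2 * (real (2*n) + 1) = 2 * (2 * real n + 1)" by simp
    show ?thesis unfolding e1 mu_form arg by simp
  qed
  have o1: "- mu (2*n+1) < QEC_fan (2*n+1)" using n by (intro QEC_odd_lower) auto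
  show "- 4 * (sin (pi / (2 * (2 * real n + 2))))\<^sup>2 < QEC_fan (2*n+1)"
  proof -
    have arg: "2 * (real (2*n+1) + 1) = 2 * (2 * real n + 2)" by simp
    show ?thesis using o1 unfolding mu_form arg by simp
  qed
  have o2: "QEC_fan (2*n+1) < - mu (Suc (2*n+1))" using n by (intro QEC_odd_upper) auto
  show "QEC_fan (2*n+1) < - 4 * (sin (pi / (2 * (2 * real n + 3))))\<^sup>2"
  proof -
    have arg: "2 * (real (Suc (2*n+1)) + 1) = 2 * (2 * real n + 3)" by simp
    show ?thesis using o2 unfolding mu_form arg by simp
  qed
next
  show "QEC_fan 3 = - 1/2" by (rule QEC_3)
next
  fix n :: nat assume n: "n \<ge> 3"
  show "QEC_fan n < QEC_fan (Suc n)"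
  proof (cases "even n")
    case True
    have "QEC_fan n = - mu n" using n True by (intro QEC_even) auto
    also have "\<dots> < - mu (Suc n)" using mu_decr[of n] n by simp
    also have "\<dots> < QEC_fan (Suc n)" using n True by (intro QEC_odd_lower) auto
    finally show ?thesis .
  next
    case False
    have "QEC_fan n < - mu (Suc n)" using n False by (intro QEC_odd_upper) auto
    also have "\<dots> = QEC_fan (Suc n)" using n False by (intro QEC_even[symmetric]) auto
    finally show ?thesis .
  qed
next
  have lo: "\<forall>\<^sub>F n in sequentially. - mu n \<le> QEC_fan n"
  proof (rule eventually_sequentiallyI[of 2])
    fix n :: nat assume n: "n \<ge> 2"
    show "- mu n \<le> QEC_fan n"
    proof (cases "even n")
      case True then show ?thesis using QEC_even[OF n] by simp
    next
      case False then have "n \<ge> 3" using n by (cases "n = 2") auto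
      then show ?thesis using QEC_odd_lower[of n] False by simp
    qed
  qed
  have hi: "\<forall>\<^sub>F n in sequentially. QEC_fan n \<le> 0"
  proof (rule eventually_sequentiallyI[of 2])
    fix n :: nat assume n: "n \<ge> 2"
    show "QEC_fan n \<le> 0"
    proof (cases "even n")
      case True then show ?thesis using QEC_even[OF n] mu_pos[of n] n by simp
    next
      case False then have "n \<ge> 3" using n by (cases "n = 2") auto
      then show ?thesis using QEC_odd_upper[of n] False mu_pos[of "Suc n"] by simp
    qed
  qed
  have "(\<lambda>n. - mu n) \<longlonglongrightarrow> - 0" by (intro tendsto_minus mu_lim)
  then show "QEC_fan \<longlonglongrightarrow> 0" using tendsto_sandwich[OF lo hi] by simp
qed


end
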